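(* Let $\nu$ be fixed with $\Re(\nu)>-1$, let $g\in C^\infty[a,b]$ with $g'(x)\neq0$ for $x\in[a,b]$, and assume $g(\xi)=0$ for some $\xi\in[a,b]$ and $g(x)\neq0$ for $x\in[a,b]\setminus\{\xi\}$. Then $M(\nu,\omega)=\int_a^bJ_\nu(\omega g(x))\,dx=\mathcal{O}(\omega^{-1})$ as $\omega\to\infty$.
   Context: $J_\nu$ is the Bessel function of the first kind of order $\nu$. *)

theory Defs
  imports "HOL-Analysis.Analysis" "HOL-Library.Landau_Symbols"
begin

text \<open>Bessel function of the first kind, principal branch:
  J_nu(z) = (z/2)^nu * sum_k (-1)^k (z/2)^(2k) / (k! Gamma(k+nu+1)),
  with (z/2)^nu = exp(nu * Ln(z/2)) (principal logarithm); for nu = 0 the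
  prefactor is 1 (so that J_0(0) = 1).  rGamma = 1/Gamma avoids poles.\<close>
definition bessel_J :: "complex \<Rightarrow> complex \<Rightarrow> complex" where
  "bessel_J \<nu> z =
     (if \<nu> = 0 then 1 else (z / 2) powr \<nu>) *
     (\<Sum>k. (-1) ^ k * rGamma (of_nat k + \<nu> + 1) / fact k * (z / 2) ^ (2 * k))"

definition smooth_on_interval :: "(real \<Rightarrow> real) \<Rightarrow> real \<Rightarrow> real \<Rightarrow> (nat \<Rightarrow> real \<Rightarrow> real) \<Rightarrow> bool" where
  "smooth_on_interval g a b G \<longleftrightarrow> G 0 = g \<and>
     (\<forall>n. \<forall>x\<in>{a..b}. (G n has_real_derivative G (Suc n) x) (at x within {a..b}))"

end

theory Submission
  imports Defs
begin


definition tc :: "complex \<Rightarrow> nat \<Rightarrow> complex" where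
  "tc \<mu> k = rGamma (of_nat k + \<mu> + 1) / fact k"

definition TT :: "complex \<Rightarrow> complex \<Rightarrow> complex" where
  "TT \<mu> w = (\<Sum>k. tc \<mu> k * w ^ k)"

lemma rG_Suc: "rGamma (of_nat (Suc k) + \<mu> + 1) = rGamma (of_nat k + \<mu> + 1 + 1)"
  by (simp add: add_ac)

lemma tc_Suc: "tc \<mu> (Suc k) * (of_nat k + \<mu> + 1) * of_nat (Suc k) = tc \<mu> k"
proof -
  have h: "(of_nat k + \<mu> + 1) * rGamma ((of_nat k + \<mu> + 1) + 1) = rGamma (of_nat k + \<mu> + 1)"
    by (rule rGamma_plus1)
  have f: "(fact (Suc k) :: complex) = of_nat (Suc k) * fact k" by (simp add: fact_Suc)
  have "tc \<mu> (Suc k) * (of_nat k + \<mu> + 1) * of_nat (Suc k)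
     = ((of_nat k + \<mu> + 1) * rGamma ((of_nat k + \<mu> + 1) + 1)) / fact k"
    unfolding tc_def rG_Suc f by (simp add: field_simps del: of_nat_Suc)
  thus ?thesis using h by (simp add: tc_def)
qed

lemma tc_summable: "summable (\<lambda>k. tc \<mu> k * w ^ k)"
proof (rule summable_ratio_test[where c="1/2" and N="nat \<lceil>2 * norm (w::complex) + norm (\<mu>::complex) + 2\<rceil>"])
  fix k assume k: "k \<ge> nat \<lceil>2 * norm w + norm \<mu> + 2\<rceil>"
  hence k1: "real k \<ge> 2 * norm w + norm \<mu> + 2" by linarith
  have "norm (of_nat k + \<mu> + 1) \<ge> norm (of_nat k + 1 :: complex) - norm \<mu>"
    by (metis add.commute add.left_commute norm_diff_ineq)
  also have "norm (of_nat k + 1 :: complex) = real k + 1"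
    using norm_of_nat[of "k+1", where 'a=complex] by (simp add: add.commute)
  finally have n1: "norm (of_nat k + \<mu> + 1) \<ge> 1" using k1 by (smt (verit) norm_ge_zero)
  have e: "tc \<mu> k = tc \<mu> (Suc k) * (of_nat k + \<mu> + 1) * of_nat (Suc k)" by (rule tc_Suc[symmetric])
  have "norm (tc \<mu> (Suc k) * w ^ Suc k) = norm (tc \<mu> (Suc k)) * norm w * norm w ^ k"
    by (simp add: norm_mult norm_power)
  also have "\<dots> \<le> norm (tc \<mu> (Suc k)) * norm (of_nat k + \<mu> + 1) * ((real k + 1)/2) * norm w ^ k"
  proof -
    have "norm w \<le> norm (of_nat k + \<mu> + 1) * ((real k + 1)/2)"
    proof -
      have a: "2 * norm w \<le> real k + 1" using k1 norm_ge_zero[of \<mu>] by linarith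
      have b: "real k + 1 \<le> norm (of_nat k + \<mu> + 1) * (real k + 1)"
        using n1 by (simp add: mult_right_mono[of 1 _ "real k + 1", simplified])
      from a b have "2 * norm w \<le> norm (of_nat k + \<mu> + 1) * (real k + 1)" by linarith
      thus ?thesis by (simp add: field_simps)
    qed
    hence "norm (tc \<mu> (Suc k)) * norm w \<le> norm (tc \<mu> (Suc k)) * (norm (of_nat k + \<mu> + 1) * ((real k + 1)/2))" by (rule mult_left_mono) simp
    thus ?thesis by (intro mult_right_mono) (auto simp: mult.assoc)
  qed
  also have "\<dots> = 1/2 * norm (tc \<mu> k * w ^ k)"
    unfolding e using norm_of_nat[of "Suc k", where 'a=complex] by (simp add: norm_mult norm_power add.commute)
  finally show "norm (tc \<mu> (Suc k) * w ^ Suc k) \<le> 1/2 * norm (tc \<mu> k * w ^ k)" .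
qed simp

lemma diffs_tc: "diffs (tc \<mu>) = tc (\<mu> + 1)"
proof (rule ext)
  fix n
  have f: "(fact (Suc n) :: complex) = of_nat (Suc n) * fact n" by (simp add: fact_Suc)
  have "rGamma (of_nat (Suc n) + \<mu> + 1) = rGamma (of_nat n + (\<mu> + 1) + 1)" by (simp add: add_ac)
  thus "diffs (tc \<mu>) n = tc (\<mu> + 1) n"
    unfolding diffs_def tc_def f by (simp del: of_nat_Suc)
qed

lemma TT_deriv: "(TT \<mu> has_field_derivative TT (\<mu> + 1) w) (at w)"
  unfolding TT_def[abs_def] using termdiffs_strong_converges_everywhere[OF tc_summable, of \<mu> w]
  by (simp add: diffs_tc)

lemma shift_sums:
  fixes c :: "nat \<Rightarrow> complex"
  assumes "summable (\<lambda>n. diffs c n * w ^ n)"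
  shows "(\<lambda>n. of_nat n * c n * w ^ n) sums (w * (\<Sum>n. diffs c n * w ^ n))"
proof -
  have "(\<lambda>n. w * (diffs c n * w ^ n)) sums (w * (\<Sum>n. diffs c n * w ^ n))"
    using assms by (intro sums_mult summable_sums)
  moreover have "(\<lambda>n. w * (diffs c n * w ^ n)) = (\<lambda>n. (\<lambda>n. of_nat n * c n * w ^ n) (Suc n))"
    by (rule ext) (simp add: diffs_def field_simps)
  ultimately have "(\<lambda>n. (\<lambda>n. of_nat n * c n * w ^ n) (Suc n)) sums (w * (\<Sum>n. diffs c n * w ^ n))"
    by simp
  from sums_Suc[OF this] show ?thesis by simp
qed

lemma TT_rec: "TT \<mu> w = (\<mu> + 1) * TT (\<mu> + 1) w + w * TT (\<mu> + 2) w"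
proof -
  have s1: "(\<lambda>n. (\<mu> + 1) * (tc (\<mu> + 1) n * w ^ n)) sums ((\<mu> + 1) * TT (\<mu> + 1) w)"
    unfolding TT_def by (intro sums_mult summable_sums tc_summable)
  have s2: "(\<lambda>n. of_nat n * tc (\<mu> + 1) n * w ^ n) sums (w * TT (\<mu> + 2) w)"
    using shift_sums[of "tc (\<mu>+1)" w] tc_summable[of "\<mu>+1+1" w]
    by (simp add: diffs_tc TT_def add.assoc)
  have "(\<lambda>n. (\<mu> + 1) * (tc (\<mu> + 1) n * w ^ n) + of_nat n * tc (\<mu> + 1) n * w ^ n) sums
      ((\<mu> + 1) * TT (\<mu> + 1) w + w * TT (\<mu> + 2) w)"
    by (rule sums_add[OF s1 s2])
  moreover have "(\<lambda>n. (\<mu> + 1) * (tc (\<mu> + 1) n * w ^ n) + of_nat n * tc (\<mu> + 1) n * w ^ n)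
      = (\<lambda>n. tc \<mu> n * w ^ n)"
  proof (rule ext)
    fix n
    have "(of_nat n + \<mu> + 1) * rGamma ((of_nat n + \<mu> + 1) + 1) = rGamma (of_nat n + \<mu> + 1)"
      by (rule rGamma_plus1)
    moreover have "of_nat n + (\<mu> + 1) + 1 = (of_nat n + \<mu> + 1) + 1" by (simp add: add_ac)
    ultimately have h: "(of_nat n + \<mu> + 1) * rGamma (of_nat n + (\<mu> + 1) + 1) = rGamma (of_nat n + \<mu> + 1)" by simp
    have "(\<mu> + 1) * (tc (\<mu> + 1) n * w ^ n) + of_nat n * tc (\<mu> + 1) n * w ^ n
       = ((of_nat n + \<mu> + 1) * rGamma (of_nat n + (\<mu> + 1) + 1)) / fact n * w ^ n"
      unfolding tc_def by (simp add: field_simps)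
    also have "\<dots> = tc \<mu> n * w ^ n" unfolding h tc_def ..
    finally show "(\<mu> + 1) * (tc (\<mu> + 1) n * w ^ n) + of_nat n * tc (\<mu> + 1) n * w ^ n = tc \<mu> n * w ^ n" .
  qed
  ultimately show ?thesis unfolding TT_def using sums_unique tc_summable
    by (metis summable_sums sums_unique2)
qed



definition Yc :: "complex \<Rightarrow> complex \<Rightarrow> complex" where
  "Yc \<mu> z = (z / 2) powr \<mu> * TT \<mu> (- (z ^ 2) / 4)"

lemma powr_m1: "(z::complex) \<noteq> 0 \<Longrightarrow> z powr (\<mu> - 1) = z powr \<mu> / z"
  using powr_add[of z "\<mu> - 1" 1] by (simp add: field_simps)

lemma powr_p1: "(z::complex) \<noteq> 0 \<Longrightarrow> z powr (\<mu> + 1) = z powr \<mu> * z"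
  using powr_add[of z \<mu> 1] by simp

lemma half_nonpos: "z \<notin> \<real>\<^sub>\<le>\<^sub>0 \<Longrightarrow> (z / 2 :: complex) \<notin> \<real>\<^sub>\<le>\<^sub>0"
  by (auto simp: complex_nonpos_Reals_iff)

lemma Yc_deriv:
  assumes z: "z \<notin> \<real>\<^sub>\<le>\<^sub>0"
  shows "(Yc \<mu> has_field_derivative (\<mu> / z * Yc \<mu> z - Yc (\<mu> + 1) z)) (at z)"
proof -
  have z0: "z \<noteq> 0" using z by auto
  have d0: "((\<lambda>z. z powr \<mu>) has_field_derivative (\<mu> * (z/2) powr (\<mu> - 1))) (at (z/2))"
    by (rule has_field_derivative_powr[OF half_nonpos[OF z]])
  have d1: "((\<lambda>z. (z / 2) powr \<mu>) has_field_derivative (\<mu> * (z/2) powr (\<mu> - 1) * (1/2))) (at z)"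
    by (rule DERIV_chain2[where g="\<lambda>z. z/2" and x=z, OF d0]) (auto intro!: derivative_eq_intros)
  have d2: "((\<lambda>z. TT \<mu> (- (z ^ 2) / 4)) has_field_derivative (TT (\<mu> + 1) (- (z ^ 2) / 4) * (- z / 2))) (at z)"
    by (rule DERIV_chain2[OF TT_deriv]) (auto intro!: derivative_eq_intros)
  have p: "(z/2) powr (\<mu> + 1) = (z/2) powr \<mu> * (z/2)" "(z/2) powr (\<mu> - 1) = (z/2) powr \<mu> / (z/2)"
     "(z/2) powr (1 + \<mu>) = (z/2) powr \<mu> * (z/2)"
    using z0 by (simp_all add: powr_p1 powr_m1 add.commute[of 1])
  show ?thesis unfolding Yc_def[abs_def]
    by (rule DERIV_cong[OF DERIV_mult[OF d1 d2]]) (use z0 in \<open>simp add: p field_simps\<close>)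
qed

lemma Yc_rec:
  assumes "z \<noteq> 0"
  shows "Yc \<mu> z = 2 * (\<mu> + 1) / z * Yc (\<mu> + 1) z - Yc (\<mu> + 2) z"
proof -
  have p1: "(z/2) powr (\<mu> + 1) = (z/2) powr \<mu> * (z/2)"
    using powr_p1[of "z/2" \<mu>] assms by simp
  have p2: "(z/2) powr (\<mu> + 2) = (z/2) powr \<mu> * (z/2) * (z/2)"
    using powr_p1[of "z/2" "\<mu>+1"] powr_p1[of "z/2" \<mu>] assms by (simp add: add.assoc)
  show ?thesis
    unfolding Yc_def TT_rec[of \<mu> "- (z ^ 2) / 4"] p1 p2 using assms
    by (simp add: field_simps power2_eq_square)
qed

definition uc :: "complex \<Rightarrow> nat \<Rightarrow> complex" where
  "uc \<mu> k = tc \<mu> k / (2 * of_nat k + \<mu> + 1)"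

definition UU :: "complex \<Rightarrow> complex \<Rightarrow> complex" where
  "UU \<mu> w = (\<Sum>k. uc \<mu> k * w ^ k)"

lemma den_ne:
  assumes "Re \<mu> > -1"
  shows "norm (2 * of_nat k + \<mu> + 1) \<ge> Re \<mu> + 1"
proof -
  have "Re (2 * of_nat k + \<mu> + 1) \<ge> Re \<mu> + 1" by simp
  thus ?thesis using complex_Re_le_cmod order_trans by blast
qed

lemma uc_summable:
  assumes "Re \<mu> > -1"
  shows "summable (\<lambda>k. uc \<mu> k * w ^ k)"
proof (rule summable_comparison_test[OF _ summable_mult[OF powser_insidea[OF tc_summable[of \<mu> "of_real (norm w + 1)"], of w], of "1 / (Re \<mu> + 1)"]])
  show "norm w < norm (complex_of_real (norm w + 1))" by simp
  show "\<exists>N. \<forall>n\<ge>N. norm (uc \<mu> n * w ^ n) \<le> 1 / (Re \<mu> + 1) * norm (tc \<mu> n * w ^ n)"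
  proof (intro exI allI impI)
    fix n
    have d: "norm (2 * of_nat n + \<mu> + 1) \<ge> Re \<mu> + 1" by (rule den_ne[OF assms])
    have "norm (uc \<mu> n * w ^ n) = norm (tc \<mu> n * w ^ n) / norm (2 * of_nat n + \<mu> + 1)"
      by (simp add: uc_def norm_mult norm_divide)
    also have "\<dots> \<le> norm (tc \<mu> n * w ^ n) / (Re \<mu> + 1)"
    proof (rule divide_left_mono)
      have "0 < Re \<mu> + 1" using assms by simp
      thus "0 < norm (2 * of_nat n + \<mu> + 1) * (Re \<mu> + 1)" using d by (intro mult_pos_pos) auto
    qed (use d in auto)
    finally show "norm (uc \<mu> n * w ^ n) \<le> 1 / (Re \<mu> + 1) * norm (tc \<mu> n * w ^ n)" by simp
  qed
qed

lemma UU_ode: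
  assumes "Re \<mu> > -1"
  shows "(\<mu> + 1) * UU \<mu> w + 2 * (w * (\<Sum>n. diffs (uc \<mu>) n * w ^ n)) = TT \<mu> w"
proof -
  have sd: "summable (\<lambda>n. diffs (uc \<mu>) n * w ^ n)"
    by (rule termdiff_converges_all) (use uc_summable[OF assms] in auto)
  have s1: "(\<lambda>n. (\<mu> + 1) * (uc \<mu> n * w ^ n)) sums ((\<mu> + 1) * UU \<mu> w)"
    unfolding UU_def by (intro sums_mult summable_sums uc_summable assms)
  have s2: "(\<lambda>n. 2 * (of_nat n * uc \<mu> n * w ^ n)) sums (2 * (w * (\<Sum>n. diffs (uc \<mu>) n * w ^ n)))"
    by (intro sums_mult shift_sums sd)
  have "(\<lambda>n. (\<mu> + 1) * (uc \<mu> n * w ^ n) + 2 * (of_nat n * uc \<mu> n * w ^ n)) sums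
     ((\<mu> + 1) * UU \<mu> w + 2 * (w * (\<Sum>n. diffs (uc \<mu>) n * w ^ n)))"
    by (rule sums_add[OF s1 s2])
  moreover have "(\<lambda>n. (\<mu> + 1) * (uc \<mu> n * w ^ n) + 2 * (of_nat n * uc \<mu> n * w ^ n)) = (\<lambda>n. tc \<mu> n * w ^ n)"
  proof (rule ext)
    fix n
    have ne: "2 * of_nat n + \<mu> + 1 \<noteq> 0" using den_ne[OF assms, of n] assms by auto
    have "(\<mu> + 1) * (uc \<mu> n * w ^ n) + 2 * (of_nat n * uc \<mu> n * w ^ n) = 
       ((2 * of_nat n + \<mu> + 1) * uc \<mu> n) * w ^ n" by (simp add: algebra_simps)
    also have "(2 * of_nat n + \<mu> + 1) * uc \<mu> n = tc \<mu> n" unfolding uc_def using ne by simp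
    finally show "(\<mu> + 1) * (uc \<mu> n * w ^ n) + 2 * (of_nat n * uc \<mu> n * w ^ n) = tc \<mu> n * w ^ n" .
  qed
  ultimately show ?thesis unfolding TT_def using tc_summable
    by (metis summable_sums sums_unique2)
qed

lemma UU_deriv:
  assumes "Re \<mu> > -1"
  shows "(UU \<mu> has_field_derivative (\<Sum>n. diffs (uc \<mu>) n * w ^ n)) (at w)"
  unfolding UU_def[abs_def]
  by (rule termdiffs_strong_converges_everywhere[OF uc_summable[OF assms]])

definition Fc :: "complex \<Rightarrow> complex \<Rightarrow> complex" where
  "Fc \<mu> z = 2 * (z / 2) powr (\<mu> + 1) * UU \<mu> (- (z ^ 2) / 4)"

lemma Fc_deriv:
  assumes z: "z \<notin> \<real>\<^sub>\<le>\<^sub>0" and mu: "Re \<mu> > -1"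
  shows "(Fc \<mu> has_field_derivative Yc \<mu> z) (at z)"
proof -
  have z0: "z \<noteq> 0" using z by auto
  define D where "D = (\<Sum>n. diffs (uc \<mu>) n * (- (z ^ 2) / 4) ^ n)"
  have d0: "((\<lambda>z. z powr (\<mu> + 1)) has_field_derivative ((\<mu> + 1) * (z/2) powr (\<mu> + 1 - 1))) (at (z/2))"
    by (rule has_field_derivative_powr[OF half_nonpos[OF z]])
  have d1: "((\<lambda>z. (z / 2) powr (\<mu> + 1)) has_field_derivative ((\<mu> + 1) * (z/2) powr (\<mu> + 1 - 1) * (1/2))) (at z)"
    by (rule DERIV_chain2[where g="\<lambda>z. z/2" and x=z, OF d0]) (auto intro!: derivative_eq_intros)
  have d2: "((\<lambda>z. UU \<mu> (- (z ^ 2) / 4)) has_field_derivative (D * (- z / 2))) (at z)"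
    unfolding D_def by (rule DERIV_chain2[OF UU_deriv[OF mu]]) (auto intro!: derivative_eq_intros)
  have p: "(z/2) powr (\<mu> + 1) = (z/2) powr \<mu> * (z/2)" "(z/2) powr (\<mu> + 1 - 1) = (z/2) powr \<mu>"
    "(z/2) powr (1 + \<mu>) = (z/2) powr \<mu> * (z/2)"
    using z0 by (simp_all add: powr_p1 add.commute[of 1])
  have e: "Yc \<mu> z = (z/2) powr \<mu> * ((\<mu> + 1) * UU \<mu> (- (z ^ 2) / 4) + 2 * ((- (z ^ 2) / 4) * D))"
    unfolding Yc_def D_def UU_ode[OF mu] ..
  show ?thesis unfolding Fc_def[abs_def] mult.assoc e
    by (rule DERIV_cong[OF DERIV_cmult[OF DERIV_mult[OF d1 d2]]]) (use z0 in \<open>simp add: p field_simps power2_eq_square\<close>)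
qed



lemma pos_nonpos: "s > 0 \<Longrightarrow> complex_of_real s \<notin> \<real>\<^sub>\<le>\<^sub>0"
  by (auto simp: complex_nonpos_Reals_iff)

definition Z1c :: "complex \<Rightarrow> complex \<Rightarrow> complex" where
  "Z1c \<nu> z = \<nu> / z * Yc \<nu> z - Yc (\<nu> + 1) z"

lemma Z1c_alg:
  fixes z \<nu> Y Y1 :: complex
  assumes "z \<noteq> 0"
  shows "(- \<nu> / z^2) * Y + \<nu> / z * (\<nu> / z * Y - Y1) - ((\<nu> + 1) / z * Y1 - (2 * (\<nu> + 1) / z * Y1 - Y))
     = (\<nu>^2 / z^2 - 1) * Y - (\<nu> / z * Y - Y1) / z"
  using assms by (simp add: field_simps power2_eq_square)

lemma inv_deriv: "(z::complex) \<noteq> 0 \<Longrightarrow> ((\<lambda>z. \<nu> / z) has_field_derivative (- \<nu> / z^2)) (at z)"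
proof -
  assume z: "z \<noteq> 0"
  have d: "((\<lambda>z. \<nu> * inverse z) has_field_derivative \<nu> * (- (inverse z ^ Suc (Suc 0)))) (at z)"
    by (intro DERIV_cmult DERIV_inverse z)
  have e: "(\<lambda>z. \<nu> / z) = (\<lambda>z. \<nu> * inverse z)" by (simp add: divide_inverse)
  show ?thesis unfolding e by (rule DERIV_cong[OF d]) (simp add: divide_inverse power_inverse eval_nat_numeral)
qed

lemma Z1c_deriv:
  assumes z: "z \<notin> \<real>\<^sub>\<le>\<^sub>0"
  shows "(Z1c \<nu> has_field_derivative ((\<nu>^2 / z^2 - 1) * Yc \<nu> z - Z1c \<nu> z / z)) (at z)"
proof -
  have z0: "z \<noteq> 0" using z by auto
  have r: "Yc (\<nu> + 1 + 1) z = 2 * (\<nu> + 1) / z * Yc (\<nu> + 1) z - Yc \<nu> z"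
    using Yc_rec[OF z0, of \<nu>] by (simp add: add.assoc one_add_one)
  show ?thesis
    unfolding Z1c_def[abs_def]
    apply (rule DERIV_cong[OF DERIV_diff[OF DERIV_mult[OF inv_deriv[OF z0] Yc_deriv[OF z]] Yc_deriv[OF z]]])
    unfolding r
    using Z1c_alg[OF z0, of \<nu> "Yc \<nu> z" "Yc (\<nu> + 1) z"] by (simp add: algebra_simps)
qed

lemma norm_sq_deriv:
  fixes f :: "real \<Rightarrow> complex"
  assumes "(f has_vector_derivative f') (at s)"
  shows "((\<lambda>s. (cmod (f s))^2) has_real_derivative (2 * Re (f' * cnj (f s)))) (at s)"
proof -
  from assms have re: "((\<lambda>x. Re (f x)) has_real_derivative Re f') (at s)"
    and im: "((\<lambda>x. Im (f x)) has_real_derivative Im f') (at s)"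
    by (auto simp: has_vector_derivative_complex_iff)
  have "((\<lambda>s. (Re (f s))^2 + (Im (f s))^2) has_real_derivative (2 * Re (f' * cnj (f s)))) (at s)"
    by (rule DERIV_cong, (rule derivative_eq_intros re im refl)+) (simp add: algebra_simps)
  thus ?thesis by (simp add: cmod_power2)
qed

lemma energy_ineq:
  fixes a b q :: complex and s :: real
  assumes "s > 0"
  shows "2 * Re (b * cnj a) + 2 * Re (((q - 1) * a - b / of_real s) * cnj b)
         \<le> cmod q * ((cmod a)^2 + (cmod b)^2)"
proof -
  have e1: "Re (b * cnj a) = Re (a * cnj b)" by simp
  have e2: "Re ((b / of_real s) * cnj b) = (cmod b)^2 / s"
  proof -
    have "(b / of_real s) * cnj b = of_real ((cmod b)^2 / s)"
    proof -
      have "(b / of_real s) * cnj b = (b * cnj b) / of_real s" by simp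
      also have "b * cnj b = of_real ((cmod b)^2)" by (rule complex_norm_square[symmetric])
      finally show ?thesis by (simp only: of_real_divide)
    qed
    thus ?thesis by (simp only: Re_complex_of_real)
  qed
  have "2 * Re (b * cnj a) + 2 * Re (((q - 1) * a - b / of_real s) * cnj b)
      = 2 * Re (q * a * cnj b) - 2 * ((cmod b)^2 / s)"
  proof -
    have h: "((q - 1) * a - b / of_real s) * cnj b = q * a * cnj b - a * cnj b - (b / of_real s) * cnj b"
      by (simp add: algebra_simps)
    have "Re (((q - 1) * a - b / of_real s) * cnj b) = Re (q * a * cnj b) - Re (a * cnj b) - Re ((b / of_real s) * cnj b)"
      unfolding h by (simp only: minus_complex.sel)
    thus ?thesis using e1 e2 by linarith
  qed
  also have "\<dots> \<le> 2 * Re (q * a * cnj b)" using assms by simp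
  also have "\<dots> \<le> 2 * (cmod q * (cmod a * cmod b))"
    using complex_Re_le_cmod[of "q * a * cnj b"] by (simp add: norm_mult)
  also have "\<dots> \<le> cmod q * ((cmod a)^2 + (cmod b)^2)"
  proof -
    have "2 * (cmod a * cmod b) \<le> (cmod a)^2 + (cmod b)^2"
      using sum_squares_bound[of "cmod a" "cmod b"] by (simp add: mult.assoc)
    thus ?thesis by (metis mult.left_commute mult_left_mono norm_ge_zero)
  qed
  finally show ?thesis .
qed



lemma Y_vderiv:
  assumes "s > 0"
  shows "((\<lambda>s. Yc \<nu> (of_real s)) has_vector_derivative Z1c \<nu> (of_real s)) (at s within A)"
  using has_vector_derivative_real_field[OF Yc_deriv[OF pos_nonpos[OF assms]]]
  by (simp add: Z1c_def)

lemma Z_vderiv: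
  assumes "s > 0"
  shows "((\<lambda>s. Z1c \<nu> (of_real s)) has_vector_derivative
     ((\<nu>^2 / (complex_of_real s)^2 - 1) * Yc \<nu> (of_real s) - Z1c \<nu> (of_real s) / of_real s)) (at s within A)"
  by (rule has_vector_derivative_real_field[OF Z1c_deriv[OF pos_nonpos[OF assms]]])

definition En :: "complex \<Rightarrow> real \<Rightarrow> real" where
  "En \<nu> s = (cmod (Yc \<nu> (of_real s)))^2 + (cmod (Z1c \<nu> (of_real s)))^2"

lemma En_deriv:
  assumes "s > 0"
  shows "\<exists>D. (En \<nu> has_real_derivative D) (at s) \<and> D \<le> (cmod \<nu>)^2 / s^2 * En \<nu> s"
proof -
  let ?a = "Yc \<nu> (of_real s)" and ?b = "Z1c \<nu> (of_real s)"
  let ?q = "\<nu>^2 / (complex_of_real s)^2"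
  have "(En \<nu> has_real_derivative
     (2 * Re (?b * cnj ?a) + 2 * Re (((?q - 1) * ?a - ?b / of_real s) * cnj ?b))) (at s)"
    unfolding En_def[abs_def]
    by (intro DERIV_add norm_sq_deriv Y_vderiv Z_vderiv assms)
  moreover have "2 * Re (?b * cnj ?a) + 2 * Re (((?q - 1) * ?a - ?b / of_real s) * cnj ?b)
     \<le> cmod ?q * ((cmod ?a)^2 + (cmod ?b)^2)" by (rule energy_ineq[OF assms])
  moreover have "cmod ?q = (cmod \<nu>)^2 / s^2" using assms by (simp add: norm_divide norm_power)
  ultimately show ?thesis unfolding En_def by auto
qed

lemma En_bound:
  "\<exists>B. \<forall>s\<ge>1. cmod (Yc \<nu> (of_real s)) \<le> B \<and> cmod (Z1c \<nu> (of_real s)) \<le> B"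
proof -
  define K where "K = (cmod \<nu>)^2"
  define \<phi> where "\<phi> s = En \<nu> s * exp (K / s)" for s
  have mono: "\<phi> X \<le> \<phi> 1" if X: "X \<ge> 1" for X
  proof (rule DERIV_nonpos_imp_nonincreasing[OF X])
    fix x :: real assume x: "1 \<le> x" "x \<le> X"
    hence x0: "x > 0" by simp
    obtain D where D: "(En \<nu> has_real_derivative D) (at x)" "D \<le> K / x^2 * En \<nu> x"
      using En_deriv[OF x0] K_def by blast
    have dexp: "((\<lambda>s. exp (K / s)) has_real_derivative (exp (K / x) * (- K / x^2))) (at x)"
      using x0 by (auto intro!: derivative_eq_intros simp: power2_eq_square field_simps)
    have "(\<phi> has_real_derivative (D * exp (K / x) + (exp (K / x) * (- K / x^2)) * En \<nu> x)) (at x)"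
      unfolding \<phi>_def[abs_def] by (rule DERIV_mult[OF D(1) dexp])
    moreover have "D * exp (K / x) + (exp (K / x) * (- K / x^2)) * En \<nu> x \<le> 0"
    proof -
      have "D * exp (K / x) \<le> (K / x^2 * En \<nu> x) * exp (K / x)"
        using D(2) by (intro mult_right_mono) auto
      thus ?thesis by (simp add: algebra_simps)
    qed
    ultimately show "\<exists>y. (\<phi> has_real_derivative y) (at x) \<and> y \<le> 0" by blast
  qed
  define B where "B = sqrt (\<phi> 1)"
  have "cmod (Yc \<nu> (of_real s)) \<le> B \<and> cmod (Z1c \<nu> (of_real s)) \<le> B" if s: "s \<ge> 1" for s
  proof -
    have K0: "K \<ge> 0" unfolding K_def by simp
    have "En \<nu> s \<le> En \<nu> s * exp (K / s)"
    proof -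
      have "1 \<le> exp (K / s)" using K0 s by simp
      moreover have "En \<nu> s \<ge> 0" unfolding En_def by simp
      ultimately show ?thesis by (metis mult.right_neutral mult_left_mono)
    qed
    also have "\<dots> \<le> \<phi> 1" using mono[OF s] unfolding \<phi>_def .
    finally have E: "En \<nu> s \<le> \<phi> 1" .
    have "(cmod (Yc \<nu> (of_real s)))^2 \<le> \<phi> 1" "(cmod (Z1c \<nu> (of_real s)))^2 \<le> \<phi> 1"
      using E unfolding En_def
      by (meson add_increasing add_increasing2 order_trans order_refl zero_le_power2)+
    thus ?thesis unfolding B_def by (auto intro!: real_le_rsqrt)
  qed
  thus ?thesis by blast
qed

definition Gc :: "complex \<Rightarrow> complex \<Rightarrow> complex" where
  "Gc \<nu> z = Fc \<nu> z + Z1c \<nu> z + Yc \<nu> z / z"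

lemma Gc_deriv:
  assumes z: "z \<notin> \<real>\<^sub>\<le>\<^sub>0" and mu: "Re \<nu> > -1"
  shows "(Gc \<nu> has_field_derivative ((\<nu>^2 - 1) / z^2 * Yc \<nu> z)) (at z)"
proof -
  have z0: "z \<noteq> 0" using z by auto
  have yd: "(Yc \<nu> has_field_derivative Z1c \<nu> z) (at z)"
    using Yc_deriv[OF z] by (simp add: Z1c_def)
  show ?thesis unfolding Gc_def[abs_def]
    apply (rule DERIV_cong[OF DERIV_add[OF DERIV_add[OF Fc_deriv[OF z mu] Z1c_deriv[OF z]] DERIV_divide[OF yd DERIV_ident z0]]])
    using z0 by (simp add: field_simps power2_eq_square)
qed

lemma F_vderiv:
  assumes "s > 0" "Re \<nu> > -1"
  shows "((\<lambda>s. Fc \<nu> (of_real s)) has_vector_derivative Yc \<nu> (of_real s)) (at s within A)"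
  by (rule has_vector_derivative_real_field[OF Fc_deriv[OF pos_nonpos[OF assms(1)] assms(2)]])

lemma F_cont:
  assumes mu: "Re \<nu> > -1"
  shows "continuous_on {0..} (\<lambda>s. Fc \<nu> (of_real s))"
proof -
  have "continuous_on UNIV (UU \<nu>)"
    by (rule continuous_at_imp_continuous_on) (auto intro: DERIV_isCont UU_deriv[OF mu])
  hence u: "continuous_on {0..} (\<lambda>(s::real). UU \<nu> (- (complex_of_real s ^ 2) / 4))"
    by (rule continuous_on_compose2) (auto intro!: continuous_intros)
  have p: "continuous_on {0..} (\<lambda>(s::real). (of_real s / 2) powr (\<nu> + 1))"
    by (rule continuous_on_powr_complex) (use mu in \<open>auto intro!: continuous_intros\<close>)
  show ?thesis unfolding Fc_def by (intro continuous_intros p u)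
qed

lemma F_bound:
  assumes mu: "Re \<nu> > -1"
  shows "\<exists>M. \<forall>s\<ge>0. cmod (Fc \<nu> (of_real s)) \<le> M"
proof -
  obtain B where B: "\<And>s. s \<ge> 1 \<Longrightarrow> cmod (Yc \<nu> (of_real s)) \<le> B \<and> cmod (Z1c \<nu> (of_real s)) \<le> B"
    using En_bound by blast
  obtain M0 where M0: "\<And>s. s \<in> {0..1} \<Longrightarrow> norm (Fc \<nu> (of_real s)) \<le> M0"
    using continuous_on_compact_bound[OF compact_Icc continuous_on_subset[OF F_cont[OF mu]]]
    by (metis atLeastAtMost_iff atLeast_iff subsetI)
  define C where "C = cmod (\<nu>^2 - 1) * B"
  have big: "cmod (Fc \<nu> (of_real X)) \<le> cmod (Gc \<nu> 1) + C + 2 * B" if X: "X \<ge> 1" for X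
  proof -
    have B0: "B \<ge> 0" using B[of 1] by (meson norm_ge_zero order_trans order_refl)
    have i1: "((\<lambda>s. (\<nu>^2 - 1) / (complex_of_real s)^2 * Yc \<nu> (of_real s)) has_integral
        (Gc \<nu> (of_real X) - Gc \<nu> (of_real 1))) {1..X}"
    proof (rule fundamental_theorem_of_calculus[OF X, where f="\<lambda>s. Gc \<nu> (of_real s)"])
      fix x assume "x \<in> {1..X}"
      hence x0: "x > 0" by simp
      show "((\<lambda>s. Gc \<nu> (of_real s)) has_vector_derivative (\<nu>^2 - 1) / (complex_of_real x)^2 * Yc \<nu> (of_real x)) (at x within {1..X})"
        by (rule has_vector_derivative_real_field[OF Gc_deriv[OF pos_nonpos[OF x0] mu]])
    qed
    have i2: "((\<lambda>s. C / s^2) has_integral (C - C / X)) {1..X}"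
    proof -
      have "((\<lambda>s. C / s^2) has_integral ((- C / X) - (- C / 1))) {1..X}"
      proof (rule fundamental_theorem_of_calculus[OF X, where f="\<lambda>s. - C / s"])
        fix x assume "x \<in> {1..X}"
        hence x0: "x \<noteq> 0" by simp
        have "((\<lambda>s. - C / s) has_real_derivative C / x^2) (at x within {1..X})"
          by (rule DERIV_cong, (rule derivative_eq_intros refl x0)+) (use x0 in \<open>simp add: power2_eq_square\<close>)
        thus "((\<lambda>s. - C / s) has_vector_derivative C / x^2) (at x within {1..X})"
          by (simp add: has_real_derivative_iff_has_vector_derivative)
      qed
      thus ?thesis by simp
    qed
    have "norm (Gc \<nu> (of_real X) - Gc \<nu> (of_real 1)) \<le> C - C / X"
    proof -
      have "norm (integral {1..X} (\<lambda>s. (\<nu>^2 - 1) / (complex_of_real s)^2 * Yc \<nu> (of_real s)))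
          \<le> integral {1..X} (\<lambda>s. C / s^2)"
      proof (rule integral_norm_bound_integral)
        show "(\<lambda>s. (\<nu>^2 - 1) / (complex_of_real s)^2 * Yc \<nu> (of_real s)) integrable_on {1..X}"
          using i1 by blast
        show "(\<lambda>s. C / s^2) integrable_on {1..X}" using i2 by blast
        fix s assume s: "s \<in> {1..X}"
        have "norm ((\<nu>^2 - 1) / (complex_of_real s)^2 * Yc \<nu> (of_real s))
            = cmod (\<nu>^2 - 1) * cmod (Yc \<nu> (of_real s)) / s^2"
          by (simp add: norm_mult norm_divide norm_power)
        also have "\<dots> \<le> C / s^2" unfolding C_def using B[of s] s
          by (intro divide_right_mono mult_left_mono) auto
        finally show "norm ((\<nu>^2 - 1) / (complex_of_real s)^2 * Yc \<nu> (of_real s)) \<le> C / s^2" .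
      qed
      thus ?thesis using integral_unique[OF i1] integral_unique[OF i2] by simp
    qed
    also have "\<dots> \<le> C" using X B0 unfolding C_def by simp
    finally have g: "norm (Gc \<nu> (of_real X) - Gc \<nu> 1) \<le> C" by simp
    have "Fc \<nu> (of_real X) = Gc \<nu> (of_real X) - Z1c \<nu> (of_real X) - Yc \<nu> (of_real X) / of_real X"
      unfolding Gc_def by simp
    hence "cmod (Fc \<nu> (of_real X)) \<le> cmod (Gc \<nu> (of_real X)) + cmod (Z1c \<nu> (of_real X)) + cmod (Yc \<nu> (of_real X)) / X"
    proof -
      have "cmod (Yc \<nu> (of_real X) / of_real X) = cmod (Yc \<nu> (of_real X)) / X"
        using X by (simp add: norm_divide)
      moreover have "cmod (Gc \<nu> (of_real X) - Z1c \<nu> (of_real X) - Yc \<nu> (of_real X) / of_real X)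
        \<le> cmod (Gc \<nu> (of_real X)) + cmod (Z1c \<nu> (of_real X)) + cmod (Yc \<nu> (of_real X) / of_real X)"
        by (meson norm_triangle_ineq4 add_mono order_trans order_refl)
      ultimately show ?thesis by (metis \<open>Fc \<nu> (of_real X) = _\<close>)
    qed
    also have "\<dots> \<le> (cmod (Gc \<nu> 1) + C) + B + B"
    proof -
      have "cmod (Gc \<nu> (of_real X)) \<le> cmod (Gc \<nu> 1) + C" using g norm_triangle_sub[of "Gc \<nu> (of_real X)" "Gc \<nu> 1"] by linarith
      moreover have "cmod (Yc \<nu> (of_real X)) / X \<le> B"
      proof -
        have "cmod (Yc \<nu> (of_real X)) / X \<le> cmod (Yc \<nu> (of_real X))"
          using X by (simp add: divide_le_eq mult_le_cancel_left1 order_trans[OF _ mult_right_mono[of 1 X]])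
        thus ?thesis using B[OF X] by linarith
      qed
      ultimately show ?thesis using B[OF X] by linarith
    qed
    finally show ?thesis by simp
  qed
  show ?thesis
  proof (intro exI allI impI)
    fix s :: real assume "s \<ge> 0"
    thus "cmod (Fc \<nu> (of_real s)) \<le> max M0 (cmod (Gc \<nu> 1) + C + 2 * B)"
      using M0[of s] big[of s] by (cases "s \<le> 1") auto
  qed
qed



lemma piece:
  fixes \<phi> \<phi>1 \<phi>2 :: "real \<Rightarrow> real" and p q e :: real
  assumes mu: "Re \<nu> > -1" and pq: "p \<le> q"
    and d0: "\<And>x. x \<in> {p..q} \<Longrightarrow> (\<phi> has_real_derivative \<phi>1 x) (at x within {p..q})"
    and d1: "\<And>x. x \<in> {p..q} \<Longrightarrow> (\<phi>1 has_real_derivative \<phi>2 x) (at x within {p..q})"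
    and c2: "continuous_on {p..q} \<phi>2"
    and nz: "\<And>x. x \<in> {p..q} \<Longrightarrow> \<phi>1 x \<noteq> 0"
    and pos: "\<And>x. x \<in> {p..q} - {e} \<Longrightarrow> \<phi> x > 0"
    and nn: "\<And>x. x \<in> {p..q} \<Longrightarrow> \<phi> x \<ge> 0"
  shows "\<exists>C. \<forall>\<omega>\<ge>1. (\<lambda>x. Yc \<nu> (of_real (\<omega> * \<phi> x))) integrable_on {p..q} \<and>
            norm (integral {p..q} (\<lambda>x. Yc \<nu> (of_real (\<omega> * \<phi> x)))) \<le> C / \<omega>"
proof -
  obtain M where M: "\<And>s. s \<ge> 0 \<Longrightarrow> cmod (Fc \<nu> (of_real s)) \<le> M" using F_bound[OF mu] by blast
  have M0: "M \<ge> 0" using M[of 0] norm_ge_zero order_trans by blast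
  have c0: "continuous_on {p..q} \<phi>" by (rule DERIV_continuous_on[OF d0])
  have c1: "continuous_on {p..q} \<phi>1" by (rule DERIV_continuous_on[OF d1])
  obtain x0 where x0: "x0 \<in> {p..q}" "\<And>y. y \<in> {p..q} \<Longrightarrow> \<bar>\<phi>1 x0\<bar> \<le> \<bar>\<phi>1 y\<bar>"
    using continuous_attains_inf[OF compact_Icc _ continuous_on_rabs[OF c1]] pq by auto
  define m where "m = \<bar>\<phi>1 x0\<bar>"
  have m0: "m > 0" unfolding m_def using nz[OF x0(1)] by simp
  have mle: "\<And>y. y \<in> {p..q} \<Longrightarrow> m \<le> \<bar>\<phi>1 y\<bar>" unfolding m_def using x0(2) .
  obtain K2 where K2: "K2 \<ge> 0" "\<And>x. x \<in> {p..q} \<Longrightarrow> norm (\<phi>2 x) \<le> K2"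
    using continuous_on_compact_bound[OF compact_Icc c2] by blast
  define C where "C = 2 * M / m + (q - p) * (K2 * M / m^2)"
  have main: "(\<lambda>x. Yc \<nu> (of_real (\<omega> * \<phi> x))) integrable_on {p..q} \<and>
            norm (integral {p..q} (\<lambda>x. Yc \<nu> (of_real (\<omega> * \<phi> x)))) \<le> C / \<omega>"
    if w: "\<omega> \<ge> 1" for \<omega>
  proof -
    have w0: "\<omega> > 0" using w by simp
    define Fw where "Fw x = Fc \<nu> (of_real (\<omega> * \<phi> x))" for x
    define Y where "Y x = Yc \<nu> (of_real (\<omega> * \<phi> x))" for x
    define H where "H x = (1 / (\<omega> * \<phi>1 x)) *\<^sub>R Fw x" for x
    define k where "k x = (\<phi>2 x / (\<omega> * (\<phi>1 x)^2)) *\<^sub>R Fw x" for x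
    have cF: "continuous_on {p..q} Fw"
      unfolding Fw_def
      by (rule continuous_on_compose2[OF F_cont[OF mu]]) (use nn w0 in \<open>auto intro!: continuous_intros c0\<close>)
    have FwM: "norm (Fw x) \<le> M" if "x \<in> {p..q}" for x
      unfolding Fw_def using M[of "\<omega> * \<phi> x"] nn[OF that] w0 by simp
    have cH: "continuous_on {p..q} H"
      unfolding H_def using nz w0 by (auto intro!: continuous_intros c1 cF)
    have ck: "continuous_on {p..q} k"
      unfolding k_def using nz w0 by (auto intro!: continuous_intros c1 c2 cF)
    have dH: "(H has_vector_derivative (Y x - k x)) (at x)" if x: "x \<in> {p<..<q} - {e}" for x
    proof -
      have xi: "x \<in> {p..q}" using x by auto
      have atx: "at x within {p..q} = at x" using x by (intro at_within_interior) auto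
      have dphi: "((\<lambda>x. \<omega> * \<phi> x) has_real_derivative \<omega> * \<phi>1 x) (at x)"
        using DERIV_cmult[OF d0[OF xi], of \<omega>] atx by simp
      have dphi1: "(\<phi>1 has_real_derivative \<phi>2 x) (at x)" using d1[OF xi] atx by simp
      have px: "\<omega> * \<phi> x > 0" using pos[of x] x w0 by auto
      have dF: "(Fw has_vector_derivative (\<omega> * \<phi>1 x) *\<^sub>R Y x) (at x)"
      proof -
        have "((\<lambda>s. Fc \<nu> (of_real s)) \<circ> (\<lambda>x. \<omega> * \<phi> x) has_vector_derivative (\<omega> * \<phi>1 x) *\<^sub>R Yc \<nu> (of_real (\<omega> * \<phi> x))) (at x)"
          by (rule vector_diff_chain_at[OF dphi[unfolded has_real_derivative_iff_has_vector_derivative] F_vderiv[OF px mu]])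
        thus ?thesis unfolding Fw_def Y_def by (simp add: o_def)
      qed
      have dinv: "((\<lambda>x. 1 / (\<omega> * \<phi>1 x)) has_real_derivative (- (\<omega> * \<phi>2 x) / (\<omega> * \<phi>1 x)^2)) (at x)"
        using nz[OF xi] w0
        by (auto intro!: derivative_eq_intros dphi1 simp: power2_eq_square field_simps)
      have "(H has_vector_derivative ((1 / (\<omega> * \<phi>1 x)) *\<^sub>R ((\<omega> * \<phi>1 x) *\<^sub>R Y x) + (- (\<omega> * \<phi>2 x) / (\<omega> * \<phi>1 x)^2) *\<^sub>R Fw x)) (at x)"
        unfolding H_def[abs_def] by (rule has_vector_derivative_scaleR[OF dinv dF])
      moreover have "(1 / (\<omega> * \<phi>1 x)) *\<^sub>R ((\<omega> * \<phi>1 x) *\<^sub>R Y x) + (- (\<omega> * \<phi>2 x) / (\<omega> * \<phi>1 x)^2) *\<^sub>R Fw x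
          = Y x - k x"
        unfolding k_def using nz[OF xi] w0 by (simp add: power2_eq_square scaleR_add_right[symmetric] algebra_simps)
      ultimately show ?thesis by simp
    qed
    have i1: "((\<lambda>x. Y x - k x) has_integral (H q - H p)) {p..q}"
      by (rule fundamental_theorem_of_calculus_interior_strong[of "{e}"]) (use pq dH cH in auto)
    have ik: "k integrable_on {p..q}" by (rule integrable_continuous_real[OF ck])
    have iY: "Y integrable_on {p..q}"
    proof -
      have "(\<lambda>x. (Y x - k x) + k x) integrable_on {p..q}"
        using integrable_add[OF has_integral_integrable[OF i1] ik] .
      thus ?thesis by simp
    qed
    have eq: "integral {p..q} Y = (H q - H p) + integral {p..q} k"
    proof -
      have "integral {p..q} (\<lambda>x. (Y x - k x) + k x) = integral {p..q} (\<lambda>x. Y x - k x) + integral {p..q} k"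
        by (rule integral_add[OF has_integral_integrable[OF i1] ik])
      thus ?thesis using integral_unique[OF i1] by simp
    qed
    have Hb: "norm (H x) \<le> M / (\<omega> * m)" if "x \<in> {p..q}" for x
    proof -
      have "norm (H x) = norm (Fw x) / (\<omega> * \<bar>\<phi>1 x\<bar>)" unfolding H_def using w0 by (simp add: abs_mult)
      also have "\<dots> \<le> M / (\<omega> * m)"
        using FwM[OF that] mle[OF that] w0 m0 M0
        by (intro frac_le mult_left_mono) auto
      finally show ?thesis .
    qed
    have kb: "norm (k x) \<le> K2 * M / m^2 / \<omega>" if "x \<in> {p..q}" for x
    proof -
      have "norm (k x) = \<bar>\<phi>2 x\<bar> * norm (Fw x) / (\<omega> * (\<phi>1 x)^2)" unfolding k_def using w0
        by (simp add: abs_mult)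
      also have "\<dots> \<le> K2 * M / (\<omega> * m^2)"
      proof (rule frac_le)
        show "\<bar>\<phi>2 x\<bar> * norm (Fw x) \<le> K2 * M" using K2(2)[OF that] FwM[OF that] K2(1)
          by (intro mult_mono) auto
        have "m^2 \<le> (\<phi>1 x)^2" using mle[OF that] m0 by (metis abs_ge_zero less_imp_le power2_abs power_mono)
        thus "\<omega> * m^2 \<le> \<omega> * (\<phi>1 x)^2" using w0 by simp
        show "0 < \<omega> * m^2" using w0 m0 by simp
      qed (use K2 M0 in auto)
      finally show ?thesis by (simp add: mult.commute)
    qed
    have "norm (integral {p..q} Y) \<le> norm (H q) + norm (H p) + norm (integral {p..q} k)"
      unfolding eq by (meson norm_triangle_ineq norm_triangle_ineq4 add_mono order_trans order_refl)
    also have "\<dots> \<le> M / (\<omega> * m) + M / (\<omega> * m) + K2 * M / m^2 / \<omega> * (q - p)"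
      using Hb[of q] Hb[of p] integral_bound[OF pq ck kb] pq by (intro add_mono) auto
    also have "\<dots> = C / \<omega>" unfolding C_def using w0 m0 by (simp add: field_simps)
    finally show ?thesis using iY unfolding Y_def by simp
  qed
  thus ?thesis by blast
qed



lemma series_eq:
  "(\<Sum>k. (-1) ^ k * rGamma (of_nat k + \<nu> + 1) / fact k * (z / 2) ^ (2 * k)) = TT \<nu> (- (z ^ 2) / 4)"
proof -
  have "(-1) ^ k * rGamma (of_nat k + \<nu> + 1) / fact k * (z / 2) ^ (2 * k) = tc \<nu> k * (- (z ^ 2) / 4) ^ k" for k
  proof -
    have a: "(z / 2) ^ (2 * k) = (z ^ 2 / 4) ^ k" by (simp add: power_mult power_divide)
    have b: "(- (z ^ 2) / 4) ^ k = (-1) ^ k * (z ^ 2 / 4) ^ k"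
      by (metis minus_divide_left power_minus)
    show ?thesis unfolding a b tc_def by simp
  qed
  thus ?thesis unfolding TT_def by simp
qed

lemma bessel_pos:
  assumes "s > 0"
  shows "bessel_J \<nu> (of_real s) = Yc \<nu> (of_real s)"
  unfolding bessel_J_def Yc_def series_eq using assms by auto

lemma bessel_neg:
  assumes "s > 0"
  shows "bessel_J \<nu> (of_real (- s)) = exp (\<i> * pi * \<nu>) * Yc \<nu> (of_real s)"
proof -
  have ser: "TT \<nu> (- ((of_real (- s)) ^ 2) / 4) = TT \<nu> (- ((of_real s) ^ 2) / 4)" by simp
  have pf: "(if \<nu> = 0 then 1 else (complex_of_real (- s) / 2) powr \<nu>) = exp (\<i> * pi * \<nu>) * (complex_of_real s / 2) powr \<nu>"
  proof (cases "\<nu> = 0")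
    case True thus ?thesis using assms by simp
  next
    case False
    have w0: "complex_of_real (s / 2) \<noteq> 0" using assms by simp
    have L: "Ln (- complex_of_real (s / 2)) = Ln (complex_of_real (s / 2)) + \<i> * pi"
      using Ln_minus[OF w0] assms by simp
    have "(complex_of_real (- s) / 2) powr \<nu> = exp (\<nu> * Ln (- complex_of_real (s / 2)))"
      using assms by (simp add: powr_def)
    also have "\<dots> = exp (\<i> * pi * \<nu>) * exp (\<nu> * Ln (complex_of_real (s / 2)))"
      unfolding L by (simp add: algebra_simps exp_add)
    also have "exp (\<nu> * Ln (complex_of_real (s / 2))) = (complex_of_real s / 2) powr \<nu>"
      using assms by (simp add: powr_def)
    finally show ?thesis using False by simp
  qed
  show ?thesis unfolding bessel_J_def series_eq Yc_def pf ser by simp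
qed

lemma sign_right:
  fixes f :: "real \<Rightarrow> real"
  assumes pq: "p < q" and c: "continuous_on {p..q} f" and nz: "\<And>x. x \<in> {p<..q} \<Longrightarrow> f x \<noteq> 0"
  shows "\<And>x. x \<in> {p<..q} \<Longrightarrow> 0 < sgn (f q) * f x"
proof -
  fix x assume x: "x \<in> {p<..q}"
  have cx: "continuous_on {x..q} f" using c x by (auto intro: continuous_on_subset)
  have fq: "f q \<noteq> 0" using nz pq by auto
  have fx: "f x \<noteq> 0" using nz x by auto
  show "0 < sgn (f q) * f x"
  proof (rule ccontr)
    assume "\<not> 0 < sgn (f q) * f x"
    hence "(f q > 0 \<and> f x < 0) \<or> (f q < 0 \<and> f x > 0)" using fq fx
      by (cases "f q > 0") (auto simp: sgn_if mult_less_0_iff split: if_splits)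
    hence "\<exists>y. x \<le> y \<and> y \<le> q \<and> f y = 0"
      using IVT'[of f x 0 q] IVT2'[of f q 0 x] cx x by (elim disjE) auto
    then obtain y where y: "x \<le> y" "y \<le> q" "f y = 0" by blast
    thus False using nz[of y] x by auto
  qed
qed

lemma sign_left:
  fixes f :: "real \<Rightarrow> real"
  assumes pq: "p < q" and c: "continuous_on {p..q} f" and nz: "\<And>x. x \<in> {p..<q} \<Longrightarrow> f x \<noteq> 0"
  shows "\<And>x. x \<in> {p..<q} \<Longrightarrow> 0 < sgn (f p) * f x"
proof -
  fix x assume x: "x \<in> {p..<q}"
  have cx: "continuous_on {p..x} f" using c x by (auto intro: continuous_on_subset)
  have fp: "f p \<noteq> 0" using nz pq by auto
  have fx: "f x \<noteq> 0" using nz x by auto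
  show "0 < sgn (f p) * f x"
  proof (rule ccontr)
    assume "\<not> 0 < sgn (f p) * f x"
    hence "(f p > 0 \<and> f x < 0) \<or> (f p < 0 \<and> f x > 0)" using fp fx
      by (cases "f p > 0") (auto simp: sgn_if mult_less_0_iff split: if_splits)
    hence "\<exists>y. p \<le> y \<and> y \<le> x \<and> f y = 0"
      using IVT'[of f p 0 x] IVT2'[of f x 0 p] cx x by (elim disjE) auto
    then obtain y where y: "p \<le> y" "y \<le> x" "f y = 0" by blast
    thus False using nz[of y] x by auto
  qed
qed

lemma piece_bessel:
  fixes g G1 G2 :: "real \<Rightarrow> real" and p q e \<sigma> :: real
  assumes mu: "Re \<nu> > -1" and pq: "p \<le> q" and sig: "\<sigma> = 1 \<or> \<sigma> = -1"
    and d0: "\<And>x. x \<in> {p..q} \<Longrightarrow> (g has_real_derivative G1 x) (at x within {p..q})"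
    and d1: "\<And>x. x \<in> {p..q} \<Longrightarrow> (G1 has_real_derivative G2 x) (at x within {p..q})"
    and c2: "continuous_on {p..q} G2"
    and nz: "\<And>x. x \<in> {p..q} \<Longrightarrow> G1 x \<noteq> 0"
    and pos: "\<And>x. x \<in> {p..q} - {e} \<Longrightarrow> \<sigma> * g x > 0"
    and nn: "\<And>x. x \<in> {p..q} \<Longrightarrow> \<sigma> * g x \<ge> 0"
  shows "\<exists>C. \<forall>\<omega>\<ge>1. (\<lambda>x. bessel_J \<nu> (of_real (\<omega> * g x))) integrable_on {p..q} \<and>
            norm (integral {p..q} (\<lambda>x. bessel_J \<nu> (of_real (\<omega> * g x)))) \<le> C / \<omega>"
proof -
  have sig2: "\<sigma> \<noteq> 0" using sig by auto
  have "\<exists>C. \<forall>\<omega>\<ge>1. (\<lambda>x. Yc \<nu> (of_real (\<omega> * (\<sigma> * g x)))) integrable_on {p..q} \<and>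
            norm (integral {p..q} (\<lambda>x. Yc \<nu> (of_real (\<omega> * (\<sigma> * g x))))) \<le> C / \<omega>"
  proof (rule piece[OF mu pq, of "\<lambda>x. \<sigma> * g x" "\<lambda>x. \<sigma> * G1 x" "\<lambda>x. \<sigma> * G2 x" e])
    fix x assume x: "x \<in> {p..q}"
    show "((\<lambda>x. \<sigma> * g x) has_real_derivative \<sigma> * G1 x) (at x within {p..q})"
      by (rule DERIV_cmult[OF d0[OF x]])
    show "((\<lambda>x. \<sigma> * G1 x) has_real_derivative \<sigma> * G2 x) (at x within {p..q})"
      by (rule DERIV_cmult[OF d1[OF x]])
    show "\<sigma> * G1 x \<noteq> 0" using nz[OF x] sig2 by simp
    show "\<sigma> * g x \<ge> 0" by (rule nn[OF x])
  next
    show "continuous_on {p..q} (\<lambda>x. \<sigma> * G2 x)" by (intro continuous_intros c2)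
  next
    fix x assume "x \<in> {p..q} - {e}" thus "\<sigma> * g x > 0" by (rule pos)
  qed
  then obtain C where C: "\<And>\<omega>. \<omega> \<ge> 1 \<Longrightarrow> (\<lambda>x. Yc \<nu> (of_real (\<omega> * (\<sigma> * g x)))) integrable_on {p..q} \<and>
            norm (integral {p..q} (\<lambda>x. Yc \<nu> (of_real (\<omega> * (\<sigma> * g x))))) \<le> C / \<omega>" by blast
  define c where "c = (if \<sigma> = 1 then 1 else exp (\<i> * pi * \<nu>))"
  have eqp: "bessel_J \<nu> (of_real (\<omega> * g x)) = c * Yc \<nu> (of_real (\<omega> * (\<sigma> * g x)))"
    if x: "x \<in> {p..q} - {e}" and w: "\<omega> \<ge> 1" for x \<omega>
  proof (cases "\<sigma> = 1")
    case True
    hence "\<omega> * g x > 0" using pos[OF x] w by simp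
    from bessel_pos[OF this, of \<nu>] show ?thesis using True unfolding c_def by simp
  next
    case False
    hence s: "\<sigma> = -1" using sig by simp
    hence "- g x > 0" using pos[OF x] by simp
    hence "\<omega> * (- g x) > 0" using w by (intro mult_pos_pos) auto
    from bessel_neg[OF this, of \<nu>] show ?thesis using s unfolding c_def by simp
  qed
  show ?thesis
  proof (intro exI allI impI conjI)
    fix \<omega> :: real assume w: "\<omega> \<ge> 1"
    have I: "(\<lambda>x. c * Yc \<nu> (of_real (\<omega> * (\<sigma> * g x)))) integrable_on {p..q}"
      by (rule integrable_on_mult_right) (use C[OF w] in auto)
    show "(\<lambda>x. bessel_J \<nu> (of_real (\<omega> * g x))) integrable_on {p..q}"
      by (rule integrable_spike[OF I negligible_sing[of e]]) (use eqp w in auto)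
    have "integral {p..q} (\<lambda>x. bessel_J \<nu> (of_real (\<omega> * g x))) = integral {p..q} (\<lambda>x. c * Yc \<nu> (of_real (\<omega> * (\<sigma> * g x))))"
      by (rule integral_spike[OF negligible_sing[of e]]) (use eqp w in auto)
    also have "\<dots> = c * integral {p..q} (\<lambda>x. Yc \<nu> (of_real (\<omega> * (\<sigma> * g x))))" by simp
    finally have "norm (integral {p..q} (\<lambda>x. bessel_J \<nu> (of_real (\<omega> * g x))))
       = cmod c * norm (integral {p..q} (\<lambda>x. Yc \<nu> (of_real (\<omega> * (\<sigma> * g x)))))"
      by (simp only: norm_mult)
    also have "\<dots> \<le> cmod c * (C / \<omega>)"
      using C[OF w] by (intro mult_left_mono) auto
    finally have "norm (integral {p..q} (\<lambda>x. bessel_J \<nu> (of_real (\<omega> * g x)))) \<le> cmod c * (C / \<omega>)" .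
    thus "norm (integral {p..q} (\<lambda>x. bessel_J \<nu> (of_real (\<omega> * g x)))) \<le> (cmod c * C) / \<omega>" by simp
  qed
qed



theorem lemma2p8:
  fixes \<nu> :: complex and g :: "real \<Rightarrow> real" and a b \<xi> :: real
    and G :: "nat \<Rightarrow> real \<Rightarrow> real"
  assumes "Re \<nu> > -1"
    and "a < b"
    and "smooth_on_interval g a b G"
    and "\<forall>x\<in>{a..b}. G 1 x \<noteq> 0"
    and "\<xi> \<in> {a..b}" and "g \<xi> = 0"
    and "\<forall>x\<in>{a..b} - {\<xi>}. g x \<noteq> 0"
  shows "(\<lambda>\<omega>::real. integral {a..b} (\<lambda>x. bessel_J \<nu> (complex_of_real (\<omega> * g x))))
           \<in> O[at_top](\<lambda>\<omega>. complex_of_real (1 / \<omega>))"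
proof -
  note mu = assms(1)
  have G0: "G 0 = g" and dG: "\<And>n x. x \<in> {a..b} \<Longrightarrow> (G n has_real_derivative G (Suc n) x) (at x within {a..b})"
    using assms(3) unfolding smooth_on_interval_def by auto
  have dg: "\<And>x. x \<in> {a..b} \<Longrightarrow> (g has_real_derivative G 1 x) (at x within {a..b})"
    using dG[of _ 0] G0 by simp
  have dg1: "\<And>x. x \<in> {a..b} \<Longrightarrow> (G 1 has_real_derivative G 2 x) (at x within {a..b})"
    using dG[of _ 1] by (simp add: numeral_2_eq_2)
  have dg2: "\<And>x. x \<in> {a..b} \<Longrightarrow> (G 2 has_real_derivative G 3 x) (at x within {a..b})"
    using dG[of _ 2] by (simp add: numeral_3_eq_3 numeral_2_eq_2)
  have cg: "continuous_on {a..b} g" by (rule DERIV_continuous_on[OF dg])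
  have cg2: "continuous_on {a..b} (G 2)" by (rule DERIV_continuous_on[OF dg2])
  have xi: "a \<le> \<xi>" "\<xi> \<le> b" using assms(5) by auto
  have nz: "\<And>x. x \<in> {a..b} \<Longrightarrow> x \<noteq> \<xi> \<Longrightarrow> g x \<noteq> 0" using assms(7) by auto
  define \<sigma>R where "\<sigma>R = (if \<xi> < b then sgn (g b) else 1)"
  have sR: "\<sigma>R = 1 \<or> \<sigma>R = -1"
  proof (cases "\<xi> < b")
    case True hence "g b \<noteq> 0" using nz[of b] xi assms(2) by auto
    thus ?thesis unfolding \<sigma>R_def using True by (auto simp: sgn_if)
  qed (simp add: \<sigma>R_def)
  have posR: "\<sigma>R * g x > 0" if x: "x \<in> {\<xi>..b} - {\<xi>}" for x
  proof (cases "\<xi> < b")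
    case True
    have "0 < sgn (g b) * g x"
    proof (rule sign_right[OF True])
      show "continuous_on {\<xi>..b} g" using cg xi by (auto intro: continuous_on_subset)
      fix y assume "y \<in> {\<xi><..b}" thus "g y \<noteq> 0" using nz[of y] xi by auto
    next
      show "x \<in> {\<xi><..b}" using x by auto
    qed
    thus ?thesis unfolding \<sigma>R_def using True by simp
  next
    case False thus ?thesis using x by auto
  qed
  have nnR: "\<sigma>R * g x \<ge> 0" if x: "x \<in> {\<xi>..b}" for x
    using posR[of x] x assms(6) by (cases "x = \<xi>") auto
  have subR: "{\<xi>..b} \<subseteq> {a..b}" using xi by auto
  have "\<exists>C. \<forall>\<omega>\<ge>1. (\<lambda>x. bessel_J \<nu> (of_real (\<omega> * g x))) integrable_on {\<xi>..b} \<and>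
            norm (integral {\<xi>..b} (\<lambda>x. bessel_J \<nu> (of_real (\<omega> * g x)))) \<le> C / \<omega>"
  proof (rule piece_bessel[OF mu xi(2) sR, of g "G 1" "G 2" \<xi>])
    fix x assume x: "x \<in> {\<xi>..b}"
    hence x': "x \<in> {a..b}" using subR by auto
    show "(g has_real_derivative G 1 x) (at x within {\<xi>..b})" by (rule DERIV_subset[OF dg[OF x'] subR])
    show "(G 1 has_real_derivative G 2 x) (at x within {\<xi>..b})" by (rule DERIV_subset[OF dg1[OF x'] subR])
    show "G 1 x \<noteq> 0" using assms(4) x' by auto
    show "\<sigma>R * g x \<ge> 0" by (rule nnR[OF x])
  next
    show "continuous_on {\<xi>..b} (G 2)" by (rule continuous_on_subset[OF cg2 subR])
  next
    fix x assume "x \<in> {\<xi>..b} - {\<xi>}" thus "\<sigma>R * g x > 0" by (rule posR)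
  qed
  then obtain CR where CR: "\<And>\<omega>. \<omega> \<ge> 1 \<Longrightarrow> (\<lambda>x. bessel_J \<nu> (of_real (\<omega> * g x))) integrable_on {\<xi>..b} \<and>
            norm (integral {\<xi>..b} (\<lambda>x. bessel_J \<nu> (of_real (\<omega> * g x)))) \<le> CR / \<omega>" by blast
  define \<sigma>L where "\<sigma>L = (if a < \<xi> then sgn (g a) else 1)"
  have sL: "\<sigma>L = 1 \<or> \<sigma>L = -1"
  proof (cases "a < \<xi>")
    case True hence "g a \<noteq> 0" using nz[of a] xi assms(2) by auto
    thus ?thesis unfolding \<sigma>L_def using True by (auto simp: sgn_if)
  qed (simp add: \<sigma>L_def)
  have posL: "\<sigma>L * g x > 0" if x: "x \<in> {a..\<xi>} - {\<xi>}" for x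
  proof (cases "a < \<xi>")
    case True
    have "0 < sgn (g a) * g x"
    proof (rule sign_left[OF True])
      show "continuous_on {a..\<xi>} g" using cg xi by (auto intro: continuous_on_subset)
      fix y assume "y \<in> {a..<\<xi>}" thus "g y \<noteq> 0" using nz[of y] xi by auto
    next
      show "x \<in> {a..<\<xi>}" using x by auto
    qed
    thus ?thesis unfolding \<sigma>L_def using True by simp
  next
    case False thus ?thesis using x by auto
  qed
  have nnL: "\<sigma>L * g x \<ge> 0" if x: "x \<in> {a..\<xi>}" for x
    using posL[of x] x assms(6) by (cases "x = \<xi>") auto
  have subL: "{a..\<xi>} \<subseteq> {a..b}" using xi by auto
  have "\<exists>C. \<forall>\<omega>\<ge>1. (\<lambda>x. bessel_J \<nu> (of_real (\<omega> * g x))) integrable_on {a..\<xi>} \<and>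
            norm (integral {a..\<xi>} (\<lambda>x. bessel_J \<nu> (of_real (\<omega> * g x)))) \<le> C / \<omega>"
  proof (rule piece_bessel[OF mu xi(1) sL, of g "G 1" "G 2" \<xi>])
    fix x assume x: "x \<in> {a..\<xi>}"
    hence x': "x \<in> {a..b}" using subL by auto
    show "(g has_real_derivative G 1 x) (at x within {a..\<xi>})" by (rule DERIV_subset[OF dg[OF x'] subL])
    show "(G 1 has_real_derivative G 2 x) (at x within {a..\<xi>})" by (rule DERIV_subset[OF dg1[OF x'] subL])
    show "G 1 x \<noteq> 0" using assms(4) x' by auto
    show "\<sigma>L * g x \<ge> 0" by (rule nnL[OF x])
  next
    show "continuous_on {a..\<xi>} (G 2)" by (rule continuous_on_subset[OF cg2 subL])
  next
    fix x assume "x \<in> {a..\<xi>} - {\<xi>}" thus "\<sigma>L * g x > 0" by (rule posL)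
  qed
  then obtain CL where CL: "\<And>\<omega>. \<omega> \<ge> 1 \<Longrightarrow> (\<lambda>x. bessel_J \<nu> (of_real (\<omega> * g x))) integrable_on {a..\<xi>} \<and>
            norm (integral {a..\<xi>} (\<lambda>x. bessel_J \<nu> (of_real (\<omega> * g x)))) \<le> CL / \<omega>" by blast
  have bound: "norm (integral {a..b} (\<lambda>x. bessel_J \<nu> (of_real (\<omega> * g x)))) \<le> (CL + CR) * norm (complex_of_real (1 / \<omega>))"
    if w: "\<omega> \<ge> 1" for \<omega>
  proof -
    have I: "(\<lambda>x. bessel_J \<nu> (of_real (\<omega> * g x))) integrable_on {a..b}"
      using Henstock_Kurzweil_Integration.integrable_combine[OF xi] CL[OF w] CR[OF w] by blast
    have "integral {a..b} (\<lambda>x. bessel_J \<nu> (of_real (\<omega> * g x)))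
       = integral {a..\<xi>} (\<lambda>x. bessel_J \<nu> (of_real (\<omega> * g x))) + integral {\<xi>..b} (\<lambda>x. bessel_J \<nu> (of_real (\<omega> * g x)))"
      using Henstock_Kurzweil_Integration.integral_combine[OF xi I] by simp
    hence "norm (integral {a..b} (\<lambda>x. bessel_J \<nu> (of_real (\<omega> * g x))))
       \<le> norm (integral {a..\<xi>} (\<lambda>x. bessel_J \<nu> (of_real (\<omega> * g x)))) + norm (integral {\<xi>..b} (\<lambda>x. bessel_J \<nu> (of_real (\<omega> * g x))))"
      by (simp only: norm_triangle_ineq)
    also have "\<dots> \<le> CL / \<omega> + CR / \<omega>"
      using CL[OF w] CR[OF w] by (intro add_mono) auto
    also have "\<dots> = (CL + CR) * norm (complex_of_real (1 / \<omega>))"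
    proof -
      have "norm (complex_of_real (1 / \<omega>)) = 1 / \<omega>" using w by (simp only: norm_of_real) simp
      thus ?thesis by (simp add: add_divide_distrib)
    qed
    finally show ?thesis .
  qed
  show ?thesis
  proof (rule bigoI[where c="CL + CR"])
    show "\<forall>\<^sub>F \<omega> in at_top. norm (integral {a..b} (\<lambda>x. bessel_J \<nu> (complex_of_real (\<omega> * g x))))
        \<le> (CL + CR) * norm (complex_of_real (1 / \<omega>))"
      unfolding eventually_at_top_linorder using bound by blast
  qed
qed

end
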